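(* Let $\pi=\pi_{-n}\cdots\pi_{-1}\pi_1\cdots\pi_n$ be a signed permutation of $[n]$ in full notation. Let $i>0$ be the largest index such that $\pi_i<0$ if such an index exists, and $i=0$ otherwise. Let $\sigma_L=\pi_{-n}\cdots\pi_{-(i+1)}$, $\tau=\pi_{-i}\cdots\pi_{-1}\pi_1\cdots\pi_i$ (empty if $i=0$), and $\sigma_R=\pi_{i+1}\cdots\pi_n$, so that $\pi=\sigma_L\tau\sigma_R$. Then $\pi$ is $\underline{2}31$-avoiding if and only if all of the following hold: (1) the positive entries of $\tau$ appear in decreasing order; (2) $\sigma_R$ avoids the pattern $231$; (3) for every positive entry $x$ of $\tau$, all entries of $\sigma_R$ smaller than $x$ appear to the left of all entries of $\sigma_R$ larger than $x$.
   Context: A signed permutation of $[n]$ is a sequence $(\pi_1,\dots,\pi_n)$ of elements of $\{\pm1,\dots,\pm n\}$ with $\{|\pi_1|,\dots,|\pi_n|\}=[n]$; its full notation is the string $\pi_{-n}\pi_{-(n-1)}\cdots\pi_{-1}\pi_1\pi_2\cdots\pi_n$ with $\pi_{-j}:=-\pi_j$. A string $s$ of integers contains the pattern $231$ if there are positions $k<l<m$ with $s_m<s_k<s_l$, and avoids it otherwise. A signed permutation in full notation is $\underline{2}31$-avoiding if there are no positions $k<l<m$ (in the order of the full notation) with $\pi_m<\pi_k<\pi_l$ and $\pi_k>0$. *)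

theory Defs
  imports Main
begin

text \<open>A signed permutation of [n] is represented as the list [pi_1, ..., pi_n] of integers.\<close>
definition signed_perm :: "nat \<Rightarrow> int list \<Rightarrow> bool" where
  "signed_perm n p \<longleftrightarrow> length p = n \<and> distinct (map abs p) \<and>
     set (map abs p) = int ` {1..n}"

definition full_notation :: "int list \<Rightarrow> int list" where
  "full_notation p = rev (map uminus p) @ p"

definition contains231 :: "int list \<Rightarrow> bool" where
  "contains231 s \<longleftrightarrow> (\<exists>k l m. k < l \<and> l < m \<and> m < length s \<and> s ! m < s ! k \<and> s ! k < s ! l)"

definition avoids231 :: "int list \<Rightarrow> bool" where
  "avoids231 s \<longleftrightarrow> \<not> contains231 s"

definition avoids_u231 :: "int list \<Rightarrow> bool" where
  "avoids_u231 s \<longleftrightarrow> \<not> (\<exists>k l m. k < l \<and> l < m \<and> m < length s \<and>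
       s ! m < s ! k \<and> s ! k < s ! l \<and> s ! k > 0)"

text \<open>Largest index i > 0 (1-based) with pi_i < 0, or 0 if none.\<close>
definition last_neg_index :: "int list \<Rightarrow> nat" where
  "last_neg_index p = (if \<exists>j < length p. p ! j < 0
      then Suc (GREATEST j. j < length p \<and> p ! j < 0) else 0)"

definition sigmaL :: "int list \<Rightarrow> int list" where
  "sigmaL p = rev (map uminus (drop (last_neg_index p) p))"

definition tau :: "int list \<Rightarrow> int list" where
  "tau p = rev (map uminus (take (last_neg_index p) p)) @ take (last_neg_index p) p"

definition sigmaR :: "int list \<Rightarrow> int list" where
  "sigmaR p = drop (last_neg_index p) p"

lemma full_notation_decomp: "full_notation p = sigmaL p @ tau p @ sigmaR p"
  unfolding full_notation_def sigmaL_def tau_def sigmaR_def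
  by (metis append_assoc append_take_drop_id rev_append map_append)

end

theory Submission
  imports Defs
begin

lemma sorted_filter_nth:
  "sorted_wrt R (filter P xs) \<longleftrightarrow>
   (\<forall>i j. i < j \<longrightarrow> j < length xs \<longrightarrow> P (xs!i) \<longrightarrow> P (xs!j) \<longrightarrow> R (xs!i) (xs!j))"
proof (induction xs)
  case Nil
  then show ?case by simp
next
  case (Cons x xs)
  have A: "(\<forall>i j. i < j \<longrightarrow> j < length (x#xs) \<longrightarrow> P ((x#xs)!i) \<longrightarrow> P ((x#xs)!j) \<longrightarrow> R ((x#xs)!i) ((x#xs)!j))
    \<longleftrightarrow> (P x \<longrightarrow> (\<forall>j<length xs. P (xs!j) \<longrightarrow> R x (xs!j))) \<and>
        (\<forall>i j. i < j \<longrightarrow> j < length xs \<longrightarrow> P (xs!i) \<longrightarrow> P (xs!j) \<longrightarrow> R (xs!i) (xs!j))"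
    (is "?L \<longleftrightarrow> ?R")
  proof
    assume L: ?L
    show ?R
    proof (intro conjI impI allI)
      fix j assume "P x" "j < length xs" "P (xs!j)"
      then show "R x (xs!j)" using L[rule_format, of 0 "Suc j"] by simp
    next
      fix i j assume "i < j" "j < length xs" "P (xs!i)" "P (xs!j)"
      then show "R (xs!i) (xs!j)" using L[rule_format, of "Suc i" "Suc j"] by simp
    qed
  next
    assume R: ?R
    show ?L
    proof (intro allI impI)
      fix i j assume h: "i < j" "j < length (x#xs)" "P ((x#xs)!i)" "P ((x#xs)!j)"
      then obtain j' where j': "j = Suc j'" by (cases j) auto
      show "R ((x#xs)!i) ((x#xs)!j)"
      proof (cases i)
        case 0
        then show ?thesis using R h j' by auto
      next
        case (Suc i')
        then show ?thesis using R h j' by auto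
      qed
    qed
  qed
  have B: "(\<forall>y\<in>set (filter P xs). R x y) \<longleftrightarrow> (\<forall>j<length xs. P (xs!j) \<longrightarrow> R x (xs!j))"
    by (auto simp: in_set_conv_nth)
  show ?case unfolding A using Cons.IH B by auto
qed

lemma main:
  fixes L T R :: "int list"
  assumes dist: "distinct (L @ T @ R)"
    and Lneg: "\<forall>x\<in>set L. x \<le> 0"
    and Rpos: "\<forall>x\<in>set R. x \<ge> 0"
    and Tlast: "T = [] \<or> last T < 0"
  shows "avoids_u231 (L @ T @ R) \<longleftrightarrow>
    (sorted_wrt (>) (filter (\<lambda>x. x > 0) T)
     \<and> avoids231 R
     \<and> (\<forall>x \<in> set T. x > 0 \<longrightarrow>
          (\<forall>a b. a < length R \<and> b < length R \<and>
                 R ! a < x \<and> R ! b > x \<longrightarrow> a < b)))"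
proof -
  define s where "s = L @ T @ R"
  define lL where "lL = length L"
  define lT where "lT = length T"
  have sL: "k < lL \<Longrightarrow> s!k = L!k" for k unfolding s_def lL_def by (simp add: nth_append)
  have sT: "lL \<le> k \<Longrightarrow> k < lL + lT \<Longrightarrow> s!k = T!(k-lL)" for k
    unfolding s_def lL_def lT_def by (auto simp: nth_append)
  have sR: "lL + lT \<le> k \<Longrightarrow> s!k = R!(k-lL-lT)" for k
    unfolding s_def lL_def lT_def by (auto simp: nth_append)
  have len: "length s = lL + lT + length R" unfolding s_def lL_def lT_def by simp
  have distT: "distinct T" using dist by simp
  show ?thesis unfolding s_def[symmetric]
  proof
    assume av: "avoids_u231 s"
    have pat: "\<not> (k < l \<and> l < m \<and> m < length s \<and> s!m < s!k \<and> s!k < s!l \<and> s!k > 0)" for k l m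
      using av unfolding avoids_u231_def by blast
    have C1: "sorted_wrt (>) (filter (\<lambda>x. x > 0) T)"
      unfolding sorted_filter_nth
    proof (intro allI impI)
      fix i j assume h: "i < j" "j < length T" "0 < T!i" "0 < T!j"
      show "T!i > T!j"
      proof (rule ccontr)
        assume "\<not> T!i > T!j"
        moreover have "T!i \<noteq> T!j" using distT h by (simp add: nth_eq_iff_index_eq)
        ultimately have lt: "T!i < T!j" by simp
        have ne: "T \<noteq> []" using h by auto
        have lastT: "last T = T!(lT-1)" using ne unfolding lT_def by (simp add: last_conv_nth)
        have "last T < 0" using Tlast ne by simp
        hence "j \<noteq> lT - 1" using h lastT by auto
        hence jl: "j < lT - 1" using h lT_def by simp
        have e: "s!(lL+(lT-1)) = last T" using sT[of "lL+(lT-1)"] lastT jl by simp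
        have "lL+(lT-1) < length s" using len jl by simp
        then show False using pat[of "lL+i" "lL+j" "lL+(lT-1)"] h jl lt e \<open>last T < 0\<close>
          sT[of "lL+i"] sT[of "lL+j"] lT_def by simp
      qed
    qed
    have C2: "avoids231 R"
      unfolding avoids231_def contains231_def
    proof clarify
      fix k l m assume h: "k < l" "l < m" "m < length R" "R!m < R!k" "R!k < R!l"
      have "R!m \<ge> 0" using Rpos h by simp
      then show False using pat[of "lL+lT+k" "lL+lT+l" "lL+lT+m"] h sR len by simp
    qed
    have C3: "\<forall>x \<in> set T. x > 0 \<longrightarrow>
          (\<forall>a b. a < length R \<and> b < length R \<and> R ! a < x \<and> R ! b > x \<longrightarrow> a < b)"
    proof (intro ballI impI allI)
      fix x a b assume x: "x \<in> set T" "x > 0" and h: "a < length R \<and> b < length R \<and> R ! a < x \<and> R ! b > x"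
      obtain t where t: "t < lT" "T!t = x" using x unfolding lT_def by (auto simp: in_set_conv_nth)
      show "a < b"
      proof (rule ccontr)
        assume "\<not> a < b"
        moreover have "a \<noteq> b" using h by auto
        ultimately have "b < a" by simp
        then show False using pat[of "lL+t" "lL+lT+b" "lL+lT+a"] h t x sT[of "lL+t"] sR len by simp
      qed
    qed
    show "sorted_wrt (>) (filter (\<lambda>x. x > 0) T) \<and> avoids231 R \<and> (\<forall>x \<in> set T. x > 0 \<longrightarrow>
          (\<forall>a b. a < length R \<and> b < length R \<and> R ! a < x \<and> R ! b > x \<longrightarrow> a < b))"
      using C1 C2 C3 by blast
  next
    assume asm: "sorted_wrt (>) (filter (\<lambda>x. x > 0) T) \<and> avoids231 R \<and> (\<forall>x \<in> set T. x > 0 \<longrightarrow>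
          (\<forall>a b. a < length R \<and> b < length R \<and> R ! a < x \<and> R ! b > x \<longrightarrow> a < b))"
    have C1: "\<And>i j. i < j \<Longrightarrow> j < length T \<Longrightarrow> 0 < T!i \<Longrightarrow> 0 < T!j \<Longrightarrow> T!i > T!j"
      using asm unfolding sorted_filter_nth by blast
    have C2: "\<And>k l m. k < l \<Longrightarrow> l < m \<Longrightarrow> m < length R \<Longrightarrow> R!m < R!k \<Longrightarrow> R!k < R!l \<Longrightarrow> False"
      using asm unfolding avoids231_def contains231_def by blast
    have C3: "\<And>x a b. x \<in> set T \<Longrightarrow> x > 0 \<Longrightarrow> a < length R \<Longrightarrow> b < length R \<Longrightarrow> R ! a < x \<Longrightarrow> R ! b > x \<Longrightarrow> a < b"
      using asm by blast
    show "avoids_u231 s" unfolding avoids_u231_def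
    proof clarify
      fix k l m assume h: "k < l" "l < m" "m < length s" "s!m < s!k" "s!k < s!l" "s!k > 0"
      show False
      proof (cases "k < lL")
        case True
        then have "s!k \<le> 0" using sL Lneg lL_def by simp
        then show False using h by simp
      next
        case kL: False
        show False
        proof (cases "k < lL + lT")
          case kT: True
          have xT: "s!k \<in> set T" using kL kT sT[of k] lT_def by simp
          show False
          proof (cases "l < lL + lT")
            case True
            have "k-lL < l-lL" "l-lL < length T" using h kL True lT_def by auto
            then show False using C1[of "k-lL" "l-lL"] h kL kT sT[of k] sT[of l] lT_def by simp
          next
            case False
            have "m - lL - lT < l - lL - lT" 
              using C3[OF xT h(6), of "m-lL-lT" "l-lL-lT"] h False sR[of l] sR[of m] len by simp
            then show False using h False by simp
          qed
        next
          case False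
          have "k-lL-lT < l-lL-lT" "l-lL-lT < m-lL-lT" "m-lL-lT < length R" using h False len by auto
          then show False using C2[of "k-lL-lT" "l-lL-lT" "m-lL-lT"] h False sR[of k] sR[of l] sR[of m] len
            by simp
        qed
      qed
    qed
  qed
qed


lemma drop_nonneg: "\<forall>x\<in>set (drop (last_neg_index p) p). x \<ge> 0"
proof
  fix x assume x: "x \<in> set (drop (last_neg_index p) p)"
  then obtain j where j: "j < length p - last_neg_index p" "x = p ! (last_neg_index p + j)"
    by (auto simp: in_set_conv_nth)
  show "x \<ge> 0"
  proof (rule ccontr)
    assume neg: "\<not> x \<ge> 0"
    let ?P = "\<lambda>j. j < length p \<and> p ! j < 0"
    have ex: "\<exists>j < length p. p ! j < 0" using j neg by (intro exI[of _ "last_neg_index p + j"]) auto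
    hence li: "last_neg_index p = Suc (Greatest ?P)" unfolding last_neg_index_def by simp
    have "last_neg_index p + j \<le> Greatest ?P"
      using j neg by (intro Greatest_le_nat[of ?P _ "length p"]) auto
    then show False using li by simp
  qed
qed

lemma tau_last: "tau p = [] \<or> last (tau p) < 0"
proof (cases "\<exists>j < length p. p ! j < 0")
  case False
  then have "last_neg_index p = 0" unfolding last_neg_index_def by simp
  then show ?thesis unfolding tau_def by simp
next
  case True
  let ?P = "\<lambda>j. j < length p \<and> p ! j < 0"
  have li: "last_neg_index p = Suc (Greatest ?P)" using True unfolding last_neg_index_def by simp
  obtain j0 where j0: "?P j0" using True by blast
  have g: "?P (Greatest ?P)" by (rule GreatestI_nat[of ?P j0 "length p"]) (use j0 in auto)
  have "take (last_neg_index p) p \<noteq> []" using li g by (cases p) auto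
  hence "last (tau p) = last (take (last_neg_index p) p)" unfolding tau_def by simp
  also have "\<dots> = p ! (Greatest ?P)" using li g by (simp add: take_Suc_conv_app_nth)
  finally show ?thesis using g by simp
qed

lemma full_distinct:
  assumes "signed_perm n p"
  shows "distinct (full_notation p)"
proof -
  have d: "distinct (map abs p)" and st: "set (map abs p) = int ` {1..n}" using assms unfolding signed_perm_def by auto
  have dp: "distinct p" using d by (simp add: distinct_map)
  have inj: "inj_on abs (set p)" using d by (simp add: distinct_map)
  have nz: "0 \<notin> set p" using st by force
  have "set (map uminus p) \<inter> set p = {}"
  proof (rule ccontr)
    assume "set (map uminus p) \<inter> set p \<noteq> {}"
    then obtain y where y: "y \<in> set p" "- y \<in> set p" by auto
    then have "y = - y" using inj by (metis abs_minus_cancel inj_on_def)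
    then show False using y nz by simp
  qed
  moreover have "distinct (map uminus p)" using dp by (simp add: distinct_map inj_on_def)
  ultimately show ?thesis unfolding full_notation_def using dp by auto
qed

theorem lemma4p1:
  fixes n :: nat and p :: "int list"
  assumes "signed_perm n p"
  shows "avoids_u231 (full_notation p) \<longleftrightarrow>
    (sorted_wrt (>) (filter (\<lambda>x. x > 0) (tau p))
     \<and> avoids231 (sigmaR p)
     \<and> (\<forall>x \<in> set (tau p). x > 0 \<longrightarrow>
          (\<forall>a b. a < length (sigmaR p) \<and> b < length (sigmaR p) \<and>
                 sigmaR p ! a < x \<and> sigmaR p ! b > x \<longrightarrow> a < b)))"
proof -
  have R: "\<forall>x\<in>set (sigmaR p). x \<ge> 0" using drop_nonneg unfolding sigmaR_def by blast
  have L: "\<forall>x\<in>set (sigmaL p). x \<le> 0" using drop_nonneg unfolding sigmaL_def by fastforce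
  have D: "distinct (sigmaL p @ tau p @ sigmaR p)" using full_distinct[OF assms] full_notation_decomp by metis
  show ?thesis unfolding full_notation_decomp using main[OF D L R tau_last] .
qed

end
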